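(* Let $0\le t_d\le t_f$ be integers, let $f:\mathbb{F}_q^k\to\{0,1,\dots,k\}$ be the Hamming weight function $f(u)=\mathrm{wt}(u)$, and suppose there exists a systematic $[n,k,2t_d+1]$ linear code over $\mathbb{F}_q$. Then $$r_f(k,t_d,t_f)\le n-k+N(2t_f+1,2(t_f-t_d)).$$
   Context: $d(\cdot,\cdot)$ is Hamming distance and $\mathrm{wt}$ the number of nonzero entries. $N(\lambda,d)$ is the minimum length of a $q$-ary code with $\lambda$ codewords and minimum distance at least $d$ (with $N(\lambda,0)=0$). An $(f,t_d,t_f)$-FCC with redundancy $r$ is a systematic encoding $u\mapsto(u,p_u)\in\mathbb{F}_q^{k+r}$ whose images are at distance $\ge 2t_d+1$ for distinct messages and $\ge 2t_f+1$ for messages with different $f$-values; $r_f(k,t_d,t_f)$ is the minimum such $r$. *)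

theory Defs
  imports Main
begin

text \<open>Vectors in F_q^n are lists of length n over a finite field 'a.\<close>

definition hdist :: "'a list \<Rightarrow> 'a list \<Rightarrow> nat" where
  "hdist x y = card {i. i < length x \<and> x ! i \<noteq> y ! i}"

definition wt :: "'a::zero list \<Rightarrow> nat" where
  "wt u = card {i. i < length u \<and> u ! i \<noteq> 0}"

definition N_code :: "'a itself \<Rightarrow> nat \<Rightarrow> nat \<Rightarrow> nat" where
  "N_code _ lam d = (if d = 0 then 0 else
     (LEAST n. \<exists>c :: nat \<Rightarrow> 'a list.
        (\<forall>i<lam. length (c i) = n) \<and>
        (\<forall>i<lam. \<forall>j<lam. i \<noteq> j \<longrightarrow> d \<le> hdist (c i) (c j))))"

definition is_FCC :: "('a list \<Rightarrow> 'b) \<Rightarrow> nat \<Rightarrow> nat \<Rightarrow> nat \<Rightarrow> nat \<Rightarrow> ('a list \<Rightarrow> 'a list) \<Rightarrow> bool" where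
  "is_FCC f k td tf r p \<longleftrightarrow>
     (\<forall>u. length u = k \<longrightarrow> length (p u) = r) \<and>
     (\<forall>u v. length u = k \<longrightarrow> length v = k \<longrightarrow> u \<noteq> v \<longrightarrow>
        2 * td + 1 \<le> hdist (u @ p u) (v @ p v)) \<and>
     (\<forall>u v. length u = k \<longrightarrow> length v = k \<longrightarrow> f u \<noteq> f v \<longrightarrow>
        2 * tf + 1 \<le> hdist (u @ p u) (v @ p v))"

definition r_f :: "('a list \<Rightarrow> 'b) \<Rightarrow> nat \<Rightarrow> nat \<Rightarrow> nat \<Rightarrow> nat" where
  "r_f f k td tf = (LEAST r. \<exists>p. is_FCC f k td tf r p)"

text \<open>Systematic linear encoder with generator matrix [I_k | P], P a k x (n-k) matrix.\<close>
definition sys_enc :: "(nat \<Rightarrow> nat \<Rightarrow> 'a::comm_semiring_1) \<Rightarrow> nat \<Rightarrow> nat \<Rightarrow> 'a list \<Rightarrow> 'a list" where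
  "sys_enc P k n u = u @ map (\<lambda>j. \<Sum>i<k. u ! i * P i j) [0..<n - k]"

end

theory Submission
  imports Defs
begin

lemma hdist_append:
  assumes "length xs = length xs'"
  shows "hdist (xs @ ys) (xs' @ ys') = hdist xs xs' + hdist ys ys'"
proof -
  have eq: "{i. i < length (xs @ ys) \<and> (xs @ ys) ! i \<noteq> (xs' @ ys') ! i}
    = {i. i < length xs \<and> xs ! i \<noteq> xs' ! i} \<union> (\<lambda>i. i + length xs) ` {i. i < length ys \<and> ys ! i \<noteq> ys' ! i}"
    (is "?L = ?A \<union> ?B")
  proof (rule set_eqI, rule iffI)
    fix i assume "i \<in> ?L"
    thus "i \<in> ?A \<union> ?B"
    proof (cases "i < length xs")
      case True thus ?thesis using \<open>i \<in> ?L\<close> assms by (auto simp: nth_append)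
    next
      case False
      hence "i = (i - length xs) + length xs" by simp
      moreover have "i - length xs \<in> {i. i < length ys \<and> ys ! i \<noteq> ys' ! i}"
        using \<open>i \<in> ?L\<close> False assms by (auto simp: nth_append)
      ultimately show ?thesis by blast
    qed
  next
    fix i assume "i \<in> ?A \<union> ?B"
    thus "i \<in> ?L" using assms by (auto simp: nth_append)
  qed
  have "card ?L = card ?A + card ?B"
    unfolding eq by (rule card_Un_disjoint) auto
  moreover have "card ?B = card {i. i < length ys \<and> ys ! i \<noteq> ys' ! i}"
    by (rule card_image) (auto simp: inj_on_def)
  ultimately show ?thesis unfolding hdist_def by simp
qed

lemma wt_le_hdist:
  fixes u v :: "'a::zero list"
  assumes "length u = length v"
  shows "wt u \<le> wt v + hdist u v"
proof -
  have "{i. i < length u \<and> u ! i \<noteq> 0} \<subseteq> {i. i < length v \<and> v ! i \<noteq> 0} \<union> {i. i < length u \<and> u ! i \<noteq> v ! i}"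
    using assms by auto
  hence "wt u \<le> card ({i. i < length v \<and> v ! i \<noteq> 0} \<union> {i. i < length u \<and> u ! i \<noteq> v ! i})"
    unfolding wt_def by (intro card_mono) auto
  also have "\<dots> \<le> wt v + hdist u v" unfolding wt_def hdist_def by (rule card_Un_le)
  finally show ?thesis .
qed

lemma hdist_sym: "length u = length v \<Longrightarrow> hdist u v = hdist v u"
  unfolding hdist_def by metis

lemma hdist_concat:
  assumes "\<And>j. length (f j) = length (g j)"
  shows "hdist (concat (map f js)) (concat (map g js)) = (\<Sum>j\<leftarrow>js. hdist (f j) (g j))"
  using assms
proof (induction js)
  case Nil thus ?case by (simp add: hdist_def)
next
  case (Cons a js) thus ?case by (simp add: hdist_append)
qed

lemma hdist_repl: "hdist (replicate d (1::'a::zero_neq_one)) (replicate d 0) = d"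
proof -
  have "{i. i < d \<and> replicate d (1::'a) ! i \<noteq> replicate d 0 ! i} = {..<d}" by auto
  thus ?thesis unfolding hdist_def by simp
qed

lemma code_exists:
  "\<exists>n. \<exists>c :: nat \<Rightarrow> 'a::zero_neq_one list.
        (\<forall>i<lam. length (c i) = n) \<and>
        (\<forall>i<lam. \<forall>j<lam. i \<noteq> j \<longrightarrow> d \<le> hdist (c i) (c j))"
proof -
  define b :: "nat \<Rightarrow> nat \<Rightarrow> 'a list" where "b i j = replicate d (if i = j then 1 else 0)" for i j
  define c :: "nat \<Rightarrow> 'a list" where "c i = concat (map (b i) [0..<lam])" for i
  have len: "\<forall>i<lam. length (c i) = lam * d"
    by (simp add: c_def b_def length_concat o_def sum_list_triv)
  have "\<forall>i<lam. \<forall>j<lam. i \<noteq> j \<longrightarrow> d \<le> hdist (c i) (c j)"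
  proof (intro allI impI)
    fix i j assume ij: "i < lam" "j < lam" "i \<noteq> j"
    have "hdist (c i) (c j) = (\<Sum>l\<leftarrow>[0..<lam]. hdist (b i l) (b j l))"
      unfolding c_def by (rule hdist_concat) (simp add: b_def)
    also have "\<dots> = (\<Sum>l\<in>{0..<lam}. hdist (b i l) (b j l))"
      by (simp add: sum_list_distinct_conv_sum_set)
    also have "\<dots> \<ge> hdist (b i i) (b j i)"
      by (rule member_le_sum) (use ij in auto)
    also have "hdist (b i i) (b j i) = d" using ij by (simp add: b_def hdist_repl)
    finally show "d \<le> hdist (c i) (c j)" .
  qed
  with len show ?thesis by blast
qed

theorem lemma9:
  fixes td tf k n :: nat and P :: "nat \<Rightarrow> nat \<Rightarrow> 'a::{finite, field}"
  assumes "td \<le> tf"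
    and "k \<le> n"
    and "\<forall>u v. length u = k \<longrightarrow> length v = k \<longrightarrow> u \<noteq> v \<longrightarrow>
           2 * td + 1 \<le> hdist (sys_enc P k n u) (sys_enc P k n v)"
  shows "r_f (wt :: 'a list \<Rightarrow> nat) k td tf \<le> n - k + N_code TYPE('a) (2 * tf + 1) (2 * (tf - td))"
proof -
  define M where "M = 2 * tf + 1"
  define d where "d = 2 * (tf - td)"
  define m where "m = N_code TYPE('a) M d"
  have "\<exists>c :: nat \<Rightarrow> 'a list. (\<forall>i<M. length (c i) = m) \<and>
        (\<forall>i<M. \<forall>j<M. i \<noteq> j \<longrightarrow> d \<le> hdist (c i) (c j))"
  proof (cases "d = 0")
    case True
    hence "m = 0" by (simp add: m_def N_code_def)
    with True show ?thesis by (intro exI[of _ "\<lambda>_. []"]) simp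
  next
    case False
    hence "m = (LEAST n. \<exists>c :: nat \<Rightarrow> 'a list. (\<forall>i<M. length (c i) = n) \<and>
        (\<forall>i<M. \<forall>j<M. i \<noteq> j \<longrightarrow> d \<le> hdist (c i) (c j)))"
      by (simp add: m_def N_code_def)
    then show ?thesis using LeastI_ex[OF code_exists[where 'a='a and lam=M and d=d]] by simp
  qed
  then obtain c :: "nat \<Rightarrow> 'a list" where clen: "\<forall>i<M. length (c i) = m"
    and cdist: "\<forall>i<M. \<forall>j<M. i \<noteq> j \<longrightarrow> d \<le> hdist (c i) (c j)" by blast
  define par where "par u = map (\<lambda>j. \<Sum>i<k. u ! i * P i j) [0..<n - k]" for u :: "'a list"
  define p where "p u = par u @ c (wt u mod M)" for u
  have M0: "M > 0" by (simp add: M_def)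
  have enc: "u @ p u = sys_enc P k n u @ c (wt u mod M)" for u
    by (simp add: p_def par_def sys_enc_def)
  have key: "hdist (u @ p u) (v @ p v) = hdist (sys_enc P k n u) (sys_enc P k n v) + hdist (c (wt u mod M)) (c (wt v mod M))"
    if "length u = k" "length v = k" for u v
    unfolding enc by (rule hdist_append) (simp add: sys_enc_def that)
  have pre: "hdist u v \<le> hdist (sys_enc P k n u) (sys_enc P k n v)"
    if "length u = k" "length v = k" for u v :: "'a list"
    unfolding sys_enc_def using that by (subst hdist_append) auto
  have "is_FCC (wt :: 'a list \<Rightarrow> nat) k td tf (n - k + m) p"
    unfolding is_FCC_def
  proof (intro conjI allI impI)
    fix u :: "'a list" assume "length u = k"
    thus "length (p u) = n - k + m" using clen M0 by (simp add: p_def par_def)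
  next
    fix u v :: "'a list" assume uv: "length u = k" "length v = k" "u \<noteq> v"
    have "2 * td + 1 \<le> hdist (sys_enc P k n u) (sys_enc P k n v)" using assms(3) uv by blast
    thus "2 * td + 1 \<le> hdist (u @ p u) (v @ p v)" using key[OF uv(1,2)] by linarith
  next
    fix u v :: "'a list" assume uv: "length u = k" "length v = k" "wt u \<noteq> wt v"
    show "2 * tf + 1 \<le> hdist (u @ p u) (v @ p v)"
    proof (cases "wt u mod M = wt v mod M")
      case True
      have w1: "wt u \<le> wt v + hdist u v" using uv by (intro wt_le_hdist) simp
      have w2: "wt v \<le> wt u + hdist u v" using uv wt_le_hdist[of v u] hdist_sym[of u v] by simp
      have "M \<le> hdist u v"
      proof (cases "wt u < wt v")
        case True
        with \<open>wt u mod M = wt v mod M\<close> have "M dvd wt v - wt u"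
          by (metis less_or_eq_imp_le mod_eq_dvd_iff_nat)
        hence "M \<le> wt v - wt u" using True by (intro dvd_imp_le) auto
        thus ?thesis using w2 by linarith
      next
        case False
        hence F: "wt v < wt u" using uv(3) by linarith
        with \<open>wt u mod M = wt v mod M\<close> have "M dvd wt u - wt v"
          by (metis less_or_eq_imp_le mod_eq_dvd_iff_nat)
        hence "M \<le> wt u - wt v" using F by (intro dvd_imp_le) auto
        thus ?thesis using w1 by linarith
      qed
      thus ?thesis using key[OF uv(1,2)] pre[OF uv(1,2)] by (simp add: M_def)
    next
      case False
      have "u \<noteq> v" using uv(3) by auto
      hence a: "2 * td + 1 \<le> hdist (sys_enc P k n u) (sys_enc P k n v)" using assms(3) uv by simp
      have "d \<le> hdist (c (wt u mod M)) (c (wt v mod M))" using cdist False M0 by simp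
      thus ?thesis using a key[OF uv(1,2)] assms(1) by (simp add: d_def)
    qed
  qed
  hence "r_f (wt :: 'a list \<Rightarrow> nat) k td tf \<le> n - k + m"
    unfolding r_f_def by (intro Least_le) blast
  thus ?thesis by (simp add: m_def M_def d_def)
qed

end
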